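(* Let $\alpha,\beta$ satisfy $\alpha+\beta=-1$. For every $n\geq1$, $$\sum_{\sigma\in\mathfrak S_{n+1}}u^{{\rm M}(\sigma)}\alpha^{{\rm LRmin}(\sigma)-1}\beta^{{\rm RLmin}(\sigma)-1}=\begin{cases}(1-u)^{\lfloor n/2\rfloor},& n\text{ even},\\ -(1-u)^{\lfloor n/2\rfloor},& n\text{ odd}.\end{cases}$$
   Context: For $\sigma=\sigma_1\cdots\sigma_m\in\mathfrak S_m$: ${\rm M}(\sigma)$ (interior peaks) is the number of $i$ with $1<i<m$ and $\sigma_{i-1}<\sigma_i>\sigma_{i+1}$; ${\rm LRmin}(\sigma)$ is the number of $i$ with $\sigma_j>\sigma_i$ for all $j<i$; ${\rm RLmin}(\sigma)$ is the number of $i$ with $\sigma_j>\sigma_i$ for all $j>i$. *)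

theory Defs
  imports "HOL-Combinatorics.Combinatorics"
begin

text \<open>Permutations of {1..m} are represented as lists (one-line notation),
  positions are 0-indexed.\<close>

definition peaks :: "nat list \<Rightarrow> nat" where
  "peaks xs = card {i. 0 < i \<and> i + 1 < length xs \<and>
      xs ! (i - 1) < xs ! i \<and> xs ! (i + 1) < xs ! i}"

definition lrmin :: "nat list \<Rightarrow> nat" where
  "lrmin xs = card {i. i < length xs \<and> (\<forall>j<i. xs ! i < xs ! j)}"

definition rlmin :: "nat list \<Rightarrow> nat" where
  "rlmin xs = card {i. i < length xs \<and>
      (\<forall>j. i < j \<and> j < length xs \<longrightarrow> xs ! i < xs ! j)}"

end

theory Submission
  imports Defs "HOL-Computational_Algebra.Polynomial"
begin

definition ins :: "nat \<Rightarrow> nat \<Rightarrow> nat list \<Rightarrow> nat list" where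
  "ins i m xs = take i xs @ m # drop i xs"

definition LRs :: "nat list \<Rightarrow> nat set" where
  "LRs xs = {i. i < length xs \<and> (\<forall>j<i. xs ! i < xs ! j)}"
definition RLs :: "nat list \<Rightarrow> nat set" where
  "RLs xs = {i. i < length xs \<and> (\<forall>j. i < j \<and> j < length xs \<longrightarrow> xs ! i < xs ! j)}"
definition PKs :: "nat list \<Rightarrow> nat set" where
  "PKs xs = {i. 0 < i \<and> i + 1 < length xs \<and> xs ! (i - 1) < xs ! i \<and> xs ! (i + 1) < xs ! i}"

lemma length_ins[simp]: "i \<le> length xs \<Longrightarrow> length (ins i m xs) = Suc (length xs)"
  by (simp add: ins_def)

lemma ins_nth:
  assumes "i \<le> length xs" "j \<le> length xs"
  shows "ins i m xs ! j = (if j < i then xs ! j else if j = i then m else xs ! (j - 1))"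
  using assms by (auto simp: ins_def nth_append min_def nth_Cons' not_less)

definition sh :: "nat \<Rightarrow> nat \<Rightarrow> nat" where "sh i j = (if j < i then j else Suc j)"
definition ush :: "nat \<Rightarrow> nat \<Rightarrow> nat" where "ush i x = (if x < i then x else x - 1)"

lemma ins_sh: "i \<le> length xs \<Longrightarrow> j < length xs \<Longrightarrow> ins i m xs ! sh i j = xs ! j"
  by (auto simp: ins_nth sh_def)
lemma ins_i: "i \<le> length xs \<Longrightarrow> ins i m xs ! i = m"
  by (auto simp: ins_nth)
lemma sh_ush: "x \<noteq> i \<Longrightarrow> sh i (ush i x) = x"
  by (auto simp: sh_def ush_def)
lemma ush_less: "x \<noteq> i \<Longrightarrow> x < Suc n \<Longrightarrow> i \<le> n \<Longrightarrow> ush i x < n"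
  by (auto simp: ush_def)
lemma sh_less_iff[simp]: "sh i a < sh i b \<longleftrightarrow> a < b"
  by (auto simp: sh_def)
lemma sh_ne[simp]: "sh i j \<noteq> i"
  by (auto simp: sh_def)
lemma sh_bound: "j < n \<Longrightarrow> sh i j < Suc n"
  by (auto simp: sh_def)
lemma inj_sh: "inj (sh i)"
  by (auto simp: inj_def sh_def split: if_splits)

lemma LR_ins:
  assumes i: "i \<le> length xs" and m: "\<forall>x\<in>set xs. x < m"
  shows "LRs (ins i m xs) = sh i ` LRs xs \<union> (if i = 0 then {0} else {})"
proof (intro equalityI subsetI)
  fix x assume x: "x \<in> LRs (ins i m xs)"
  show "x \<in> sh i ` LRs xs \<union> (if i = 0 then {0} else {})"
  proof (cases "x = i")
    case True
    show ?thesis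
    proof (cases "i = 0")
      case False
      then have "ins i m xs ! x < ins i m xs ! 0" using x True unfolding LRs_def by auto
      moreover have "xs ! 0 \<in> set xs" using False i by (intro nth_mem) auto
      ultimately show ?thesis using False True i m by (auto simp: ins_nth)
    qed (use True in auto)
  next
    case False
    have xl: "x < Suc (length xs)" using x i by (auto simp: LRs_def)
    have "ush i x \<in> LRs xs"
      unfolding LRs_def
    proof (intro CollectI conjI allI impI)
      show "ush i x < length xs" using ush_less[OF False xl i] .
      fix z assume z: "z < ush i x"
      have "sh i z < x" using z sh_less_iff[of i z "ush i x"] sh_ush[OF False] by simp
      then have "ins i m xs ! x < ins i m xs ! sh i z" using x by (auto simp: LRs_def)
      moreover have "z < length xs" using z ush_less[OF False xl i] by simp
      ultimately show "xs ! ush i x < xs ! z"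
        using ins_sh[OF i, of "ush i x" m] ins_sh[OF i, of z m] sh_ush[OF False] ush_less[OF False xl i]
        by simp
    qed
    then show ?thesis using sh_ush[OF False] by (metis UnI1 image_eqI)
  qed
next
  fix x assume x: "x \<in> sh i ` LRs xs \<union> (if i = 0 then {0} else {})"
  show "x \<in> LRs (ins i m xs)"
  proof (cases "x \<in> sh i ` LRs xs")
    case True
    then obtain j where j: "j \<in> LRs xs" "x = sh i j" by auto
    have jl: "j < length xs" using j by (auto simp: LRs_def)
    show ?thesis unfolding LRs_def
    proof (intro CollectI conjI allI impI)
      show "x < length (ins i m xs)" using j i sh_bound[OF jl] by simp
      fix y assume y: "y < x"
      show "ins i m xs ! x < ins i m xs ! y"
      proof (cases "y = i")
        case True
        then show ?thesis using j ins_sh[OF i jl] ins_i[OF i] m jl by (simp add: ins_i)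
      next
        case False
        have yl: "y < Suc (length xs)" using y sh_bound[OF jl, of i] j by simp
        have "ush i y < j" using y j sh_ush[OF False] sh_less_iff[of i "ush i y" j] by simp
        then have "xs ! j < xs ! ush i y" using j by (auto simp: LRs_def)
        then show ?thesis using ins_sh[OF i jl] ins_sh[OF i ush_less[OF False yl i]] sh_ush[OF False] j
          by simp
      qed
    qed
  next
    case False
    then show ?thesis using x by (auto simp: LRs_def split: if_splits)
  qed
qed

lemma RL_ins:
  assumes i: "i \<le> length xs" and m: "\<forall>x\<in>set xs. x < m"
  shows "RLs (ins i m xs) = sh i ` RLs xs \<union> (if i = length xs then {i} else {})"
proof (intro equalityI subsetI)
  fix x assume x: "x \<in> RLs (ins i m xs)"
  show "x \<in> sh i ` RLs xs \<union> (if i = length xs then {i} else {})"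
  proof (cases "x = i")
    case True
    show ?thesis
    proof (cases "i = length xs")
      case False
      then have "ins i m xs ! x < ins i m xs ! (Suc i)" using x True i unfolding RLs_def by auto
      moreover have "xs ! i \<in> set xs" using False i by (intro nth_mem) auto
      moreover have "ins i m xs ! Suc i = xs ! i" "ins i m xs ! x = m" using False True i by (auto simp: ins_nth)
      ultimately have False using m by (metis less_asym)
      then show ?thesis ..
    qed (use True in auto)
  next
    case False
    have xl: "x < Suc (length xs)" using x i by (auto simp: RLs_def)
    have "ush i x \<in> RLs xs"
      unfolding RLs_def
    proof (intro CollectI conjI allI impI)
      show "ush i x < length xs" using ush_less[OF False xl i] .
      fix z assume z: "ush i x < z \<and> z < length xs"
      have "x < sh i z" using z sh_less_iff[of i "ush i x" z] sh_ush[OF False] by simp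
      moreover have "sh i z < length (ins i m xs)" using z sh_bound[of z "length xs" i] i by simp
      ultimately have "ins i m xs ! x < ins i m xs ! sh i z" using x by (auto simp: RLs_def)
      then show "xs ! ush i x < xs ! z"
        using ins_sh[OF i, of "ush i x" m] ins_sh[OF i, of z m] sh_ush[OF False] ush_less[OF False xl i] z
        by simp
    qed
    then show ?thesis using sh_ush[OF False] by (metis UnI1 image_eqI)
  qed
next
  fix x assume x: "x \<in> sh i ` RLs xs \<union> (if i = length xs then {i} else {})"
  show "x \<in> RLs (ins i m xs)"
  proof (cases "x \<in> sh i ` RLs xs")
    case True
    then obtain j where j: "j \<in> RLs xs" "x = sh i j" by auto
    have jl: "j < length xs" using j by (auto simp: RLs_def)
    show ?thesis unfolding RLs_def
    proof (intro CollectI conjI allI impI)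
      show "x < length (ins i m xs)" using j i sh_bound[OF jl] by simp
      fix y assume y: "x < y \<and> y < length (ins i m xs)"
      show "ins i m xs ! x < ins i m xs ! y"
      proof (cases "y = i")
        case True
        then show ?thesis using j ins_sh[OF i jl] ins_i[OF i] m jl by (simp add: ins_i)
      next
        case False
        have yl: "y < Suc (length xs)" using y i by simp
        have "j < ush i y" using y j sh_ush[OF False] sh_less_iff[of i j "ush i y"] by simp
        then have "xs ! j < xs ! ush i y" using j ush_less[OF False yl i] by (auto simp: RLs_def)
        then show ?thesis using ins_sh[OF i jl] ins_sh[OF i ush_less[OF False yl i]] sh_ush[OF False] j
          by simp
      qed
    qed
  next
    case False
    then have "x = i" "i = length xs" using x by (auto split: if_splits)
    then show ?thesis using i by (auto simp: RLs_def ins_nth)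
  qed
qed

lemma ush_nb: "x \<noteq> i \<Longrightarrow> x - 1 \<noteq> i \<Longrightarrow> x + 1 \<noteq> i \<Longrightarrow> 0 < x \<Longrightarrow>
   sh i (ush i x - 1) = x - 1 \<and> sh i (ush i x + 1) = x + 1 \<and> 0 < ush i x
   \<and> ush i x \<noteq> i \<and> ush i x + 1 \<noteq> i"
  by (auto simp: sh_def ush_def)
lemma sh_nb: "j + 1 \<noteq> i \<Longrightarrow> j \<noteq> i \<Longrightarrow> 0 < j \<Longrightarrow>
   sh i (j - 1) = sh i j - 1 \<and> sh i (j + 1) = sh i j + 1 \<and> 0 < sh i j"
  by (auto simp: sh_def)

lemma PK_ins:
  assumes i: "i \<le> length xs" and m: "\<forall>x\<in>set xs. x < m"
  shows "PKs (ins i m xs) = sh i ` {j\<in>PKs xs. j + 1 \<noteq> i \<and> j \<noteq> i} \<union>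
          (if 0 < i \<and> i < length xs then {i} else {})"
proof (intro equalityI subsetI)
  fix x assume x: "x \<in> PKs (ins i m xs)"
  have x0: "0 < x" and xl: "x + 1 < Suc (length xs)"
    and a: "ins i m xs ! (x - 1) < ins i m xs ! x" and b: "ins i m xs ! (x + 1) < ins i m xs ! x"
    using x i by (auto simp: PKs_def)
  show "x \<in> sh i ` {j\<in>PKs xs. j + 1 \<noteq> i \<and> j \<noteq> i} \<union>
          (if 0 < i \<and> i < length xs then {i} else {})"
  proof (cases "x = i")
    case True
    then show ?thesis using x0 xl by auto
  next
    case False
    have xm: "ins i m xs ! x < m" using ins_sh[OF i, of "ush i x" m] sh_ush[OF False]
        ush_less[OF False _ i] xl m by (metis add_lessD1 nth_mem)
    have n1: "x - 1 \<noteq> i" using a xm ins_i[OF i, of m] by auto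
    have n2: "x + 1 \<noteq> i" using b xm ins_i[OF i, of m] by auto
    note nb = ush_nb[OF False n1 n2 x0]
    have ul: "ush i x + 1 < length xs" using xl i False n2 x0 unfolding ush_def by auto
    have e0: "xs ! ush i x = ins i m xs ! x"
      using ins_sh[OF i, of "ush i x" m] sh_ush[OF False] ul by simp
    have e1: "xs ! (ush i x - 1) = ins i m xs ! (x - 1)"
      using ins_sh[OF i, of "ush i x - 1" m] nb ul by simp
    have e2: "xs ! (ush i x + 1) = ins i m xs ! (x + 1)"
      using ins_sh[OF i, of "ush i x + 1" m] nb ul by simp
    have "xs ! (ush i x - 1) < xs ! ush i x" using a e0 e1 by (simp only:)
    moreover have "xs ! (ush i x + 1) < xs ! ush i x" using b e0 e2 by (simp only:)
    ultimately have "ush i x \<in> PKs xs"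
      unfolding PKs_def mem_Collect_eq using nb ul by (intro conjI) simp_all
    then have "ush i x \<in> {j\<in>PKs xs. j + 1 \<noteq> i \<and> j \<noteq> i}" using nb by simp
    moreover have "x = sh i (ush i x)" using sh_ush[OF False] by simp
    ultimately show ?thesis by (intro UnI1 image_eqI)
  qed
next
  fix x assume x: "x \<in> sh i ` {j\<in>PKs xs. j + 1 \<noteq> i \<and> j \<noteq> i} \<union>
          (if 0 < i \<and> i < length xs then {i} else {})"
  show "x \<in> PKs (ins i m xs)"
  proof (cases "x \<in> sh i ` {j\<in>PKs xs. j + 1 \<noteq> i \<and> j \<noteq> i}")
    case True
    then obtain j where j: "j \<in> PKs xs" "j + 1 \<noteq> i" "j \<noteq> i" "x = sh i j" by auto
    have j0: "0 < j" and jl: "j + 1 < length xs"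
      and a: "xs ! (j - 1) < xs ! j" and b: "xs ! (j + 1) < xs ! j" using j by (auto simp: PKs_def)
    note nb = sh_nb[OF j(2,3) j0]
    have "sh i (j + 1) < Suc (length xs)" using sh_bound[OF jl] .
    moreover have "ins i m xs ! x = xs ! j" using ins_sh[OF i, of j m] j jl by simp
    moreover have "ins i m xs ! (x - 1) = xs ! (j - 1)" using ins_sh[OF i, of "j - 1" m] j jl nb by simp
    moreover have "ins i m xs ! (x + 1) = xs ! (j + 1)" using ins_sh[OF i, of "j + 1" m] j jl nb by simp
    ultimately show ?thesis using nb a b j jl i unfolding PKs_def by simp
  next
    case False
    then have xi: "x = i" "0 < i" "i < length xs" using x by (auto split: if_splits)
    have "xs ! (i - 1) \<in> set xs" "xs ! i \<in> set xs" using xi by auto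
    then show ?thesis using xi i m by (auto simp: PKs_def ins_nth)
  qed
qed

lemma set_ins: "set (ins i m xs) = insert m (set xs)"
proof -
  obtain as bs where "take i xs = as" "drop i xs = bs" "xs = as @ bs" by (metis append_take_drop_id)
  then show ?thesis by (auto simp: ins_def)
qed

lemma distinct_ins: "distinct (ins i m xs) \<longleftrightarrow> distinct xs \<and> m \<notin> set xs"
proof -
  obtain as bs where "take i xs = as" "drop i xs = bs" "xs = as @ bs" by (metis append_take_drop_id)
  then show ?thesis by (auto simp: ins_def)
qed

lemma ins_inj:
  assumes "ins i m xs = ins j m ys" "m \<notin> set xs" "m \<notin> set ys"
    "i \<le> length xs" "j \<le> length ys"
  shows "i = j \<and> xs = ys"
proof -
  have len: "length xs = length ys" using arg_cong[OF assms(1), of length] assms(4,5) by simp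
  have ij: "i = j"
  proof (rule ccontr)
    assume "i \<noteq> j"
    then consider "i < j" | "j < i" by linarith
    then show False
    proof cases
      case 1
      have "ins j m ys ! i = ys ! i" using 1 assms(5) by (simp add: ins_nth)
      moreover have "ins i m xs ! i = m" using assms(4) by (simp add: ins_nth)
      moreover have "ys ! i \<in> set ys" using 1 assms(5) by simp
      ultimately show False using assms(1,3) by simp
    next
      case 2
      have "ins i m xs ! j = xs ! j" using 2 assms(4) by (simp add: ins_nth)
      moreover have "ins j m ys ! j = m" using assms(5) by (simp add: ins_nth)
      moreover have "xs ! j \<in> set xs" using 2 assms(4) by simp
      ultimately show False using assms(1,2) by simp
    qed
  qed
  have "take i xs @ m # drop i xs = take i ys @ m # drop i ys" using assms(1) ij by (simp add: ins_def)
  then have "take i xs = take i ys \<and> m # drop i xs = m # drop i ys"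
    using append_eq_append_conv[of "take i xs" "take i ys" "m # drop i xs" "m # drop i ys"]
      ij assms(4,5) len by simp
  then have "xs = ys" by (metis append_take_drop_id list.inject)
  with ij show ?thesis by simp
qed

lemma perm_len: "xs \<in> permutations_of_set {1..k} \<Longrightarrow> length xs = k"
  by (metis card_atLeastAtMost diff_Suc_1 distinct_card permutations_of_setD)

lemma bij_ins:
  "bij_betw (\<lambda>(xs, i). ins i (Suc k) xs) (permutations_of_set {1..k} \<times> {0..k})
      (permutations_of_set {1..Suc k})"
  unfolding bij_betw_def
proof
  show "inj_on (\<lambda>(xs, i). ins i (Suc k) xs) (permutations_of_set {1..k} \<times> {0..k})"
  proof (rule inj_onI, clarify)
    fix xs i ys j
    assume a: "xs \<in> permutations_of_set {1..k}" "i \<in> {0..k}" "ys \<in> permutations_of_set {1..k}"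
      "j \<in> {0..k}" "ins i (Suc k) xs = ins j (Suc k) ys"
    have "Suc k \<notin> set xs" "Suc k \<notin> set ys"
      using permutations_of_setD(1)[OF a(1)] permutations_of_setD(1)[OF a(3)] by auto
    then show "xs = ys \<and> i = j" using ins_inj[OF a(5)] a perm_len by auto
  qed
next
  show "(\<lambda>(xs, i). ins i (Suc k) xs) ` (permutations_of_set {1..k} \<times> {0..k}) =
    permutations_of_set {1..Suc k}"
  proof (intro equalityI subsetI)
    fix t assume "t \<in> (\<lambda>(xs, i). ins i (Suc k) xs) ` (permutations_of_set {1..k} \<times> {0..k})"
    then obtain xs i where xs: "xs \<in> permutations_of_set {1..k}" "t = ins i (Suc k) xs" by auto
    then show "t \<in> permutations_of_set {1..Suc k}"
      using permutations_of_setD[OF xs(1)]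
      by (intro permutations_of_setI) (auto simp: set_ins distinct_ins)
  next
    fix t assume t: "t \<in> permutations_of_set {1..Suc k}"
    have st: "set t = {1..Suc k}" and dt: "distinct t" using permutations_of_setD[OF t] by auto
    have lt: "length t = Suc k" using perm_len[OF t] .
    obtain i where i: "i < length t" "t ! i = Suc k" 
    proof -
      have "Suc k \<in> set t" using st by simp
      then show ?thesis using that by (auto simp: in_set_conv_nth)
    qed
    define xs where "xs = take i t @ drop (Suc i) t"
    have teq: "t = take i t @ Suc k # drop (Suc i) t" using id_take_nth_drop[OF i(1)] i(2) by simp
    have tins: "t = ins i (Suc k) xs"
      unfolding ins_def xs_def using i(1) by (subst teq) simp
    have "distinct xs \<and> Suc k \<notin> set xs" using dt tins distinct_ins by metis
    moreover have "insert (Suc k) (set xs) = {1..Suc k}" using st tins set_ins by metis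
    ultimately have "set xs = {1..Suc k} - {Suc k}" by (metis Diff_insert_absorb)
    also have "\<dots> = {1..k}" by auto
    finally have "set xs = {1..k}" .
    then have "xs \<in> permutations_of_set {1..k}" using \<open>distinct xs \<and> _\<close> by auto
    moreover have "i \<in> {0..k}" using i lt by simp
    ultimately show "t \<in> (\<lambda>(xs, i). ins i (Suc k) xs) ` (permutations_of_set {1..k} \<times> {0..k})"
      using tins by (intro image_eqI[of _ _ "(xs, i)"]) auto
  qed
qed

lemma sum_ins:
  "(\<Sum>t\<in>permutations_of_set {1..Suc k}. f t) =
   (\<Sum>xs\<in>permutations_of_set {1..k}. \<Sum>i\<in>{0..k}. f (ins i (Suc k) xs))"
proof -
  have "(\<Sum>t\<in>permutations_of_set {1..Suc k}. f t) =
     (\<Sum>p\<in>permutations_of_set {1..k} \<times> {0..k}. f ((\<lambda>(xs, i). ins i (Suc k) xs) p))"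
    using sum.reindex_bij_betw[OF bij_ins[of k], of f] by simp
  also have "\<dots> = (\<Sum>xs\<in>permutations_of_set {1..k}. \<Sum>i\<in>{0..k}. f (ins i (Suc k) xs))"
    by (subst sum.cartesian_product) (simp add: case_prod_beta)
  finally show ?thesis .
qed

lemma lrmin_LRs: "lrmin xs = card (LRs xs)" by (simp add: lrmin_def LRs_def)
lemma rlmin_RLs: "rlmin xs = card (RLs xs)" by (simp add: rlmin_def RLs_def)
lemma peaks_PKs: "peaks xs = card (PKs xs)" by (simp add: peaks_def PKs_def)

lemma finite_LRs: "finite (LRs xs)" by (auto simp: LRs_def)
lemma finite_RLs: "finite (RLs xs)" by (auto simp: RLs_def)
lemma finite_PKs: "finite (PKs xs)"
  by (rule finite_subset[of _ "{..<length xs}"]) (auto simp: PKs_def)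

lemma perm_bound: "xs \<in> permutations_of_set {1..k} \<Longrightarrow> \<forall>x\<in>set xs. x < Suc k"
  using permutations_of_setD(1) by fastforce

lemma lrmin_ins:
  assumes "xs \<in> permutations_of_set {1..k}" "i \<le> k"
  shows "lrmin (ins i (Suc k) xs) = lrmin xs + (if i = 0 then 1 else 0)"
proof -
  have l: "length xs = k" using perm_len[OF assms(1)] .
  have e: "LRs (ins i (Suc k) xs) = sh i ` LRs xs \<union> (if i = 0 then {0} else {})"
    using LR_ins[of i xs "Suc k", OF _ perm_bound[OF assms(1)]] l assms(2) by simp
  have c: "card (sh i ` LRs xs) = card (LRs xs)" using inj_sh by (intro card_image) (auto simp: inj_on_def inj_def)
  show ?thesis
  proof (cases "i = 0")
    case True
    have "0 \<notin> sh i ` LRs xs" using True by (auto simp: sh_def)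
    then show ?thesis using e c True finite_LRs by (simp add: lrmin_LRs)
  qed (use e c in \<open>simp add: lrmin_LRs\<close>)
qed

lemma rlmin_ins:
  assumes "xs \<in> permutations_of_set {1..k}" "i \<le> k"
  shows "rlmin (ins i (Suc k) xs) = rlmin xs + (if i = k then 1 else 0)"
proof -
  have l: "length xs = k" using perm_len[OF assms(1)] .
  have e: "RLs (ins i (Suc k) xs) = sh i ` RLs xs \<union> (if i = k then {i} else {})"
    using RL_ins[of i xs "Suc k", OF _ perm_bound[OF assms(1)]] l assms(2) by simp
  have c: "card (sh i ` RLs xs) = card (RLs xs)" using inj_sh by (intro card_image) (auto simp: inj_on_def inj_def)
  show ?thesis
  proof (cases "i = k")
    case True
    have "i \<notin> sh i ` RLs xs" by (auto simp: sh_def split: if_splits)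
    then show ?thesis using e c True finite_RLs by (simp add: rlmin_RLs)
  qed (use e c in \<open>simp add: rlmin_RLs\<close>)
qed

lemma peaks_ins:
  assumes "xs \<in> permutations_of_set {1..k}" "i \<le> k"
  shows "peaks (ins i (Suc k) xs) = card {j\<in>PKs xs. j + 1 \<noteq> i \<and> j \<noteq> i} +
     (if 0 < i \<and> i < k then 1 else 0)"
proof -
  have l: "length xs = k" using perm_len[OF assms(1)] .
  have e: "PKs (ins i (Suc k) xs) = sh i ` {j\<in>PKs xs. j + 1 \<noteq> i \<and> j \<noteq> i} \<union>
          (if 0 < i \<and> i < k then {i} else {})"
    using PK_ins[of i xs "Suc k", OF _ perm_bound[OF assms(1)]] l assms(2) by simp
  have c: "card (sh i ` {j\<in>PKs xs. j + 1 \<noteq> i \<and> j \<noteq> i}) = card {j\<in>PKs xs. j + 1 \<noteq> i \<and> j \<noteq> i}"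
    using inj_sh by (intro card_image) (auto simp: inj_on_def inj_def)
  have f: "finite {j\<in>PKs xs. j + 1 \<noteq> i \<and> j \<noteq> i}" using finite_PKs by simp
  show ?thesis
  proof (cases "0 < i \<and> i < k")
    case True
    have "i \<notin> sh i ` {j\<in>PKs xs. j + 1 \<noteq> i \<and> j \<noteq> i}" by (auto simp: sh_def split: if_splits)
    then show ?thesis using e c True f by (simp add: peaks_PKs)
  next
    case False
    then show ?thesis using e c False by (simp add: peaks_PKs)
  qed
qed

lemma lrmin_pos: "xs \<noteq> [] \<Longrightarrow> 1 \<le> lrmin xs"
proof -
  assume "xs \<noteq> []"
  then have "0 \<in> LRs xs" by (auto simp: LRs_def)
  then have "card (LRs xs) > 0" using finite_LRs[of xs] card_gt_0_iff by blast
  then show ?thesis by (simp add: lrmin_LRs)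
qed

lemma rlmin_pos: "xs \<noteq> [] \<Longrightarrow> 1 \<le> rlmin xs"
proof -
  assume "xs \<noteq> []"
  then have "length xs - 1 \<in> RLs xs" by (auto simp: RLs_def)
  then have "card (RLs xs) > 0" using finite_RLs[of xs] card_gt_0_iff by blast
  then show ?thesis by (simp add: rlmin_RLs)
qed

lemma PKs_bound: "j \<in> PKs xs \<Longrightarrow> 0 < j \<and> j + 1 < length xs"
  by (auto simp: PKs_def)

lemma PKs_nadj: "j \<in> PKs xs \<Longrightarrow> Suc j \<notin> PKs xs"
  by (auto simp: PKs_def)

lemma interior_peaks:
  assumes s: "xs \<in> permutations_of_set {1..k}" and i: "0 < i" "i < k"
  shows "peaks (ins i (Suc k) xs) = (if i - 1 \<in> PKs xs \<or> i \<in> PKs xs then peaks xs else Suc (peaks xs))"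
proof -
  have eq: "{j\<in>PKs xs. j + 1 \<noteq> i \<and> j \<noteq> i} = PKs xs - {i - 1, i}" using i by auto
  have cd: "card (PKs xs - {i - 1, i}) = card (PKs xs) - card (PKs xs \<inter> {i - 1, i})"
    using finite_PKs card_Diff_subset_Int by (metis Diff_Int2 Int_lower2 card_Diff_subset finite_Int inf.cobounded1 infinite_super)
  have pk: "peaks (ins i (Suc k) xs) = card (PKs xs - {i - 1, i}) + 1"
    using peaks_ins[OF s, of i] i eq by simp
  show ?thesis
  proof (cases "i - 1 \<in> PKs xs")
    case True
    then have "i \<notin> PKs xs" using PKs_nadj[OF True] i by simp
    then have "PKs xs \<inter> {i - 1, i} = {i - 1}" using True by auto
    moreover have "card (PKs xs) \<ge> 1" using True finite_PKs card_0_eq by (metis One_nat_def Suc_leI empty_iff neq0_conv)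
    ultimately show ?thesis using pk cd True by (simp add: peaks_PKs)
  next
    case False
    show ?thesis
    proof (cases "i \<in> PKs xs")
      case True
      then have "PKs xs \<inter> {i - 1, i} = {i}" using False by auto
      moreover have "card (PKs xs) \<ge> 1" using True finite_PKs card_0_eq by (metis One_nat_def Suc_leI empty_iff neq0_conv)
      ultimately show ?thesis using pk cd True by (simp add: peaks_PKs)
    next
      case F2: False
      then have "PKs xs \<inter> {i - 1, i} = {}" using False by auto
      then show ?thesis using pk cd F2 False by (simp add: peaks_PKs)
    qed
  qed
qed

lemma count_A:
  assumes s: "xs \<in> permutations_of_set {1..k}"
  shows "card ({1..<k} \<inter> {i. i - 1 \<in> PKs xs \<or> i \<in> PKs xs}) = 2 * peaks xs"
proof -
  have l: "length xs = k" using perm_len[OF s] .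
  have eq: "{1..<k} \<inter> {i. i - 1 \<in> PKs xs \<or> i \<in> PKs xs} = PKs xs \<union> Suc ` PKs xs"
  proof (intro equalityI subsetI)
    fix x assume x: "x \<in> {1..<k} \<inter> {i. i - 1 \<in> PKs xs \<or> i \<in> PKs xs}"
    then have "x = Suc (x - 1)" by auto
    then show "x \<in> PKs xs \<union> Suc ` PKs xs" using x by blast
  next
    fix x assume "x \<in> PKs xs \<union> Suc ` PKs xs"
    then show "x \<in> {1..<k} \<inter> {i. i - 1 \<in> PKs xs \<or> i \<in> PKs xs}"
      using PKs_bound l by fastforce
  qed
  have dis: "PKs xs \<inter> Suc ` PKs xs = {}" using PKs_nadj by blast
  have "card (PKs xs \<union> Suc ` PKs xs) = card (PKs xs) + card (Suc ` PKs xs)"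
    using card_Un_disjoint[OF finite_PKs finite_imageI[OF finite_PKs] dis] .
  also have "card (Suc ` PKs xs) = card (PKs xs)" by (simp add: card_image)
  finally show ?thesis using eq by (simp add: peaks_PKs)
qed

function pd :: "('a :: comm_ring_1) poly \<Rightarrow> 'a poly"
  where "pd (pCons a p) = (if p = 0 then 0 else p + pCons 0 (pd p))"
  by (auto intro: pCons_cases)

termination pd
  by (relation "measure degree") simp_all

declare pd.simps[simp del]

lemma pd_0 [simp]: "pd 0 = 0"
  using pd.simps [of 0 0] by simp

lemma pd_pCons: "pd (pCons a p) = p + pCons 0 (pd p)"
  by (simp add: pd.simps)

lemma coeff_pd: "coeff (pd p) n = of_nat (Suc n) * coeff p (Suc n)"
  by (induct p arbitrary: n)
     (auto simp add: pd_pCons coeff_pCons algebra_simps split: nat.split)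

lemma pd_const [simp]: "pd [:a:] = 0"
  by (simp add: pd_pCons)

lemma pd_add: "pd (p + q) = pd p + pd q"
  by (rule poly_eqI) (simp add: coeff_pd algebra_simps)

lemma pd_smult: "pd (smult a p) = smult a (pd p)"
  by (rule poly_eqI) (simp add: coeff_pd algebra_simps)

lemma pd_mult: "pd (p * q) = p * pd q + q * pd p"
  by (induct p) (auto simp: pd_add pd_smult pd_pCons algebra_simps)

lemma pd_power_Suc: "pd (p ^ Suc n) = of_nat (Suc n) * p ^ n * pd p"
proof (induction n)
  case (Suc n)
  have "pd (p ^ Suc (Suc n)) = p * pd (p ^ Suc n) + p ^ Suc n * pd p"
    unfolding power_Suc[of p "Suc n"] by (rule pd_mult)
  also have "\<dots> = of_nat (Suc (Suc n)) * p ^ Suc n * pd p"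
    using Suc by (simp add: algebra_simps del: of_nat_Suc) (simp add: algebra_simps)
  finally show ?case .
qed auto

lemma of_nat_poly_smult: "of_nat n * p = smult (of_nat n) p"
  by (simp add: of_nat_poly)

lemma pd_monom: "pd (monom c n) = monom (of_nat n * c) (n - 1)"
  by (rule poly_eqI) (cases n; auto simp: coeff_pd)

lemma pd_sum: "pd (sum f A) = (\<Sum>x\<in>A. pd (f x))"
  by (induct A rule: infinite_finite_induct) (simp_all add: pd_add)

lemma pc2: "[:a, b:] = monom a 0 + monom b 1"
  by (simp add: monom_0 monom_Suc)
lemma pc3: "[:a, b, c:] = monom a 0 + monom b 1 + monom c 2"
  by (simp add: monom_0 monom_Suc numeral_2_eq_2)

lemma poly_id:
  fixes a b c :: "'a :: comm_ring_1"
  assumes ab: "a + b = -1" and le: "2 * p \<le> k - 1"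
  shows "monom (a * c) p + monom (b * c) p + monom (of_nat (2 * p) * c) p
     + monom (of_nat (k - 1 - 2 * p) * c) (Suc p)
   = [:-1, of_nat (k - 1):] * monom c p + [:0, 2, -2:] * pd (monom c p)"
proof -
  obtain r where r: "k - 1 = 2 * p + r" using le le_Suc_ex by blast
  then have r2: "k - 1 - 2 * p = r" by simp
  have b: "b = -1 - a" using ab by (simp add: algebra_simps)
  show ?thesis
  proof (cases p)
    case 0
    show ?thesis unfolding pc2 pc3 r2 r using 0
      by (rule_tac poly_eqI) (auto simp: pd_monom mult_monom distrib_right b coeff_pCons algebra_simps split: nat.split)
  next
    case (Suc q)
    show ?thesis unfolding pc2 pc3 r2 r using Suc
      by (rule_tac poly_eqI) (auto simp: pd_monom mult_monom distrib_right b coeff_pCons algebra_simps split: nat.split)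
  qed
qed

definition wt :: "'a::comm_ring_1 \<Rightarrow> 'a \<Rightarrow> nat list \<Rightarrow> 'a" where
  "wt a b xs = a ^ (lrmin xs - 1) * b ^ (rlmin xs - 1)"

lemma sum_monom_const: "(\<Sum>i\<in>S. monom c n) = monom (of_nat (card S) * c) n"
  by (simp add: monom_sum[symmetric])

lemma sigma_sum:
  fixes a b :: "'a::comm_ring_1"
  assumes ab: "a + b = -1" and s: "xs \<in> permutations_of_set {1..k}" and k: "1 \<le> k"
  shows "(\<Sum>i\<in>{0..k}. monom (wt a b (ins i (Suc k) xs)) (peaks (ins i (Suc k) xs))) =
    [:-1, of_nat (k - 1):] * monom (wt a b xs) (peaks xs) + [:0, 2, -2:] * pd (monom (wt a b xs) (peaks xs))"
proof -
  define c where "c = wt a b xs"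
  define p where "p = peaks xs"
  define A where "A = {i. i - 1 \<in> PKs xs \<or> i \<in> PKs xs}"
  have l: "length xs = k" using perm_len[OF s] .
  have ne: "xs \<noteq> []" using l k by auto
  have lr1: "1 \<le> lrmin xs" and rl1: "1 \<le> rlmin xs" using lrmin_pos[OF ne] rlmin_pos[OF ne] by auto
  have dec: "{0..k} = insert 0 (insert k {1..<k})" using k by auto
  have w0: "wt a b (ins 0 (Suc k) xs) = a * c"
    using lrmin_ins[OF s, of 0] rlmin_ins[OF s, of 0] k lr1 unfolding wt_def c_def
    by (cases "lrmin xs") auto
  have wk: "wt a b (ins k (Suc k) xs) = b * c"
    using lrmin_ins[OF s, of k] rlmin_ins[OF s, of k] k rl1 unfolding wt_def c_def
    by (cases "rlmin xs") (auto simp: algebra_simps)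
  have p0: "peaks (ins 0 (Suc k) xs) = p"
  proof -
    have "{j\<in>PKs xs. j + 1 \<noteq> 0 \<and> j \<noteq> 0} = PKs xs" using PKs_bound by auto
    then show ?thesis using peaks_ins[OF s, of 0] unfolding p_def by (simp add: peaks_PKs)
  qed
  have pk: "peaks (ins k (Suc k) xs) = p"
  proof -
    have "{j\<in>PKs xs. j + 1 \<noteq> k \<and> j \<noteq> k} = PKs xs" using PKs_bound l by fastforce
    then show ?thesis using peaks_ins[OF s, of k] unfolding p_def by (simp add: peaks_PKs)
  qed
  have wi: "wt a b (ins i (Suc k) xs) = c" if "i \<in> {1..<k}" for i
    using lrmin_ins[OF s, of i] rlmin_ins[OF s, of i] that unfolding wt_def c_def by auto
  have pi: "peaks (ins i (Suc k) xs) = (if i \<in> A then p else Suc p)" if "i \<in> {1..<k}" for i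
    using interior_peaks[OF s, of i] that unfolding A_def p_def by auto
  have "(\<Sum>i\<in>{1..<k}. monom (wt a b (ins i (Suc k) xs)) (peaks (ins i (Suc k) xs))) =
        (\<Sum>i\<in>{1..<k}. (if i \<in> A then monom c p else monom c (Suc p)))"
    using wi pi by (intro sum.cong) auto
  also have "\<dots> = (\<Sum>i\<in>{1..<k} \<inter> A. monom c p) + (\<Sum>i\<in>{1..<k} \<inter> - A. monom c (Suc p))"
    using sum.If_cases[of "{1..<k}" "\<lambda>i. i \<in> A" "\<lambda>i. monom c p" "\<lambda>i. monom c (Suc p)"] by simp
  also have "\<dots> = monom (of_nat (card ({1..<k} \<inter> A)) * c) p + monom (of_nat (card ({1..<k} - A)) * c) (Suc p)"
    by (simp only: sum_monom_const Diff_eq)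
  also have "card ({1..<k} \<inter> A) = 2 * p" using count_A[OF s] unfolding A_def p_def .
  also have "card ({1..<k} - A) = (k - 1) - 2 * p"
    using card_Diff_subset_Int[of "{1..<k}" A] count_A[OF s] unfolding A_def p_def by simp
  finally have int: "(\<Sum>i\<in>{1..<k}. monom (wt a b (ins i (Suc k) xs)) (peaks (ins i (Suc k) xs))) =
     monom (of_nat (2 * p) * c) p + monom (of_nat (k - 1 - 2 * p) * c) (Suc p)" .
  have le: "2 * p \<le> k - 1"
  proof -
    have "card ({1..<k} \<inter> A) \<le> card {1..<k}" by (intro card_mono) auto
    then show ?thesis using count_A[OF s] unfolding A_def p_def by simp
  qed
  have "(\<Sum>i\<in>{0..k}. monom (wt a b (ins i (Suc k) xs)) (peaks (ins i (Suc k) xs))) =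
     monom (a * c) p + (monom (b * c) p +
       (\<Sum>i\<in>{1..<k}. monom (wt a b (ins i (Suc k) xs)) (peaks (ins i (Suc k) xs))))"
    unfolding dec using k w0 wk p0 pk by (subst sum.insert; simp)+
  also have "\<dots> = [:-1, of_nat (k - 1):] * monom c p + [:0, 2, -2:] * pd (monom c p)"
    unfolding int using poly_id[OF ab le, of c] by (simp add: add.assoc)
  finally show ?thesis unfolding c_def p_def .
qed

definition Q :: "'a::comm_ring_1 \<Rightarrow> 'a \<Rightarrow> nat \<Rightarrow> 'a poly" where
  "Q a b k = (\<Sum>xs\<in>permutations_of_set {1..k}. monom (wt a b xs) (peaks xs))"

lemma Q_rec:
  fixes a b :: "'a::comm_ring_1"
  assumes ab: "a + b = -1" and k: "1 \<le> k"
  shows "Q a b (Suc k) = [:-1, of_nat (k - 1):] * Q a b k + [:0, 2, -2:] * pd (Q a b k)"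
proof -
  have "Q a b (Suc k) = (\<Sum>xs\<in>permutations_of_set {1..k}.
      \<Sum>i\<in>{0..k}. monom (wt a b (ins i (Suc k) xs)) (peaks (ins i (Suc k) xs)))"
    unfolding Q_def by (rule sum_ins)
  also have "\<dots> = (\<Sum>xs\<in>permutations_of_set {1..k}.
      [:-1, of_nat (k - 1):] * monom (wt a b xs) (peaks xs) + [:0, 2, -2:] * pd (monom (wt a b xs) (peaks xs)))"
    using sigma_sum[OF ab _ k] by (intro sum.cong) auto
  also have "\<dots> = [:-1, of_nat (k - 1):] * Q a b k + [:0, 2, -2:] * pd (Q a b k)"
    unfolding Q_def by (simp add: sum.distrib sum_distrib_left pd_sum)
  finally show ?thesis .
qed

lemma Q_1: "Q a b 1 = 1"
proof -
  have "LRs [1] = {0}" "RLs [1] = {0}" "PKs [1] = {}" by (auto simp: LRs_def RLs_def PKs_def)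
  then have "lrmin [1] = 1" "rlmin [1] = 1" "peaks [1] = 0" by (auto simp: lrmin_LRs rlmin_RLs peaks_PKs)
  moreover have "Q a b 1 = monom (wt a b [1]) (peaks [1])"
  proof -
    have "permutations_of_set {1..1::nat} = {[1]}" by simp
    then show ?thesis unfolding Q_def by simp
  qed
  ultimately have "Q a b 1 = monom 1 0" by (simp add: wt_def)
  then show ?thesis by (simp add: monom_0 one_pCons)
qed

lemma pd_1: "pd (1 :: 'a::comm_ring_1 poly) = 0"
  by (simp add: one_pCons pd_pCons)

lemma pdL: "pd [:1, -1:] = ([:-1:] :: 'a::comm_ring_1 poly)"
  by (simp add: pd_pCons)

lemma R1: "(A * X - 1) * (S * (L * P)) + 2 * X * L * (- (S * (J * P))) =
   S * ((A - 2 * J) * X - 1) * (L * P)" for A X S L P J :: "'b::comm_ring_1"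
  by (simp add: algebra_simps)

lemma step_alg:
  fixes s :: "'a::comm_ring_1"
  defines "L \<equiv> [:1, -1:] :: 'a poly"
  shows "[:-1, of_nat (k - 1):] * smult s (L ^ j) + [:0, 2, -2:] * pd (smult s (L ^ j)) =
     (if k - 1 = 2 * j then smult (-s) (L ^ j) else if k - 1 = 2 * j + 1 then smult (-s) (L ^ Suc j)
      else [:-1, of_nat (k - 1):] * smult s (L ^ j) + [:0, 2, -2:] * pd (smult s (L ^ j)))"
proof -
  define X :: "'a poly" where "X = [:0, 1:]"
  have eL: "L = 1 - X" unfolding L_def X_def by (simp add: one_pCons)
  have e3: "[:0, 2, -2:] = 2 * X * L" unfolding L_def X_def by (simp add: numeral_poly)
  have e2: "[:-1, of_nat m:] = of_nat m * X - 1" for m unfolding X_def by (simp add: of_nat_poly one_pCons)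
  have es: "smult s q = [:s:] * q" for q :: "'a poly" by simp
  have pdLj: "pd (L ^ j) = - (of_nat j * L ^ (j - 1))"
  proof (cases j)
    case 0 then show ?thesis by (simp add: pd_1)
  next
    case (Suc q)
    have "pd (L ^ Suc q) = of_nat (Suc q) * L ^ q * [:-1:]" by (simp only: L_def pd_power_Suc pdL)
    moreover have "([:-1:] :: 'a poly) = -1" by (simp add: one_pCons)
    ultimately show ?thesis using Suc by simp
  qed
  have key: "[:-1, of_nat m:] * smult s (L ^ j) + [:0, 2, -2:] * pd (smult s (L ^ j)) =
     [:s:] * ((of_nat m - 2 * of_nat j) * X - 1) * L ^ j" for m
  proof (cases j)
    case 0
    then show ?thesis unfolding e2 by (simp add: pd_smult pd_1 algebra_simps)
  next
    case (Suc q)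
    have pdj: "pd (smult s (L ^ j)) = - ([:s:] * (of_nat j * L ^ q))" using pdLj Suc by (simp add: pd_smult)
    have Lj: "L ^ j = L * L ^ q" using Suc by simp
    have "[:-1, of_nat m:] * smult s (L ^ j) + [:0, 2, -2:] * pd (smult s (L ^ j)) =
       (of_nat m * X - 1) * ([:s:] * (L * L ^ q)) + 2 * X * L * (- ([:s:] * (of_nat j * L ^ q)))"
      unfolding pdj unfolding e2 e3 Lj es by (rule refl)
    also have "\<dots> = [:s:] * ((of_nat m - 2 * of_nat j) * X - 1) * (L * L ^ q)"
      by (rule R1)
    finally show ?thesis unfolding Lj .
  qed
  show ?thesis
  proof (cases "k - 1 = 2 * j")
    case True
    have c0: "(of_nat (k - 1) - 2 * of_nat j :: 'a poly) = 0" using True by simp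
    have "[:-1, of_nat (k - 1):] * smult s (L ^ j) + [:0, 2, -2:] * pd (smult s (L ^ j))
          = [:s:] * (0 * X - 1) * L ^ j" using key[of "k - 1"] unfolding c0 .
    also have "\<dots> = smult (-s) (L ^ j)" by simp
    finally show ?thesis using True by simp
  next
    case False
    show ?thesis
    proof (cases "k - 1 = 2 * j + 1")
      case True
      have c1: "(of_nat (k - 1) - 2 * of_nat j :: 'a poly) = 1" using True by simp
      have xl: "X - 1 = - L" using eL by simp
      have "[:-1, of_nat (k - 1):] * smult s (L ^ j) + [:0, 2, -2:] * pd (smult s (L ^ j))
          = [:s:] * (1 * X - 1) * L ^ j" using key[of "k - 1"] unfolding c1 .
      also have "\<dots> = - ([:s:] * (L * L ^ j))" unfolding mult_1_left xl by (simp only: mult_minus_left mult_minus_right mult.assoc)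
      also have "\<dots> = smult (-s) (L ^ Suc j)" by simp
      finally have eq: "[:-1, of_nat (k - 1):] * smult s (L ^ j) + [:0, 2, -2:] * pd (smult s (L ^ j))
          = smult (-s) (L ^ Suc j)" .
      show ?thesis unfolding if_not_P[OF False] if_P[OF True] by (rule eq)
    qed (use False in simp)
  qed
qed

lemma Q_closed:
  fixes a b :: "'a::comm_ring_1"
  assumes ab: "a + b = -1" and k: "1 \<le> k"
  shows "Q a b k = smult (if even (k - 1) then 1 else -1) ([:1, -1:] ^ ((k - 1) div 2))"
  using k
proof (induction k rule: nat_induct_at_least)
  case base
  have "Q a b (Suc 0) = 1" using Q_1[of a b] by (simp only: One_nat_def)
  then show ?case by simp
next
  case (Suc k)
  define j where "j = (k - 1) div 2"
  define s :: 'a where "s = (if even (k - 1) then 1 else -1)"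
  have Qk: "Q a b k = smult s ([:1, -1:] ^ j)" using Suc unfolding s_def j_def by simp
  have r: "Q a b (Suc k) = [:-1, of_nat (k - 1):] * smult s ([:1, -1:] ^ j) + [:0, 2, -2:] * pd (smult s ([:1, -1:] ^ j))"
    using Q_rec[OF ab Suc(1)] Qk by simp
  show ?case
  proof (cases "even (k - 1)")
    case True
    then have "k - 1 = 2 * j" unfolding j_def by simp
    moreover have "odd (Suc k - 1)" "(Suc k - 1) div 2 = j"
    proof -
      obtain t where t: "k - 1 = 2 * t" using evenE[OF True] by blast
      then have "k = 2 * t + 1" using Suc(1) by arith
      then show "odd (Suc k - 1)" "(Suc k - 1) div 2 = j" unfolding j_def using t by auto
    qed
    ultimately show ?thesis using r step_alg[of k s j] True unfolding s_def by simp
  next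
    case False
    have "k - 1 = 2 * j + 1" unfolding j_def by (rule odd_two_times_div_two_succ[OF False, symmetric])
    moreover have "even (Suc k - 1)" "(Suc k - 1) div 2 = Suc j"
    proof -
      obtain t where t: "k - 1 = 2 * t + 1" using oddE[OF False] by blast
      then have "k = 2 * t + 2" using Suc(1) by arith
      then show "even (Suc k - 1)" "(Suc k - 1) div 2 = Suc j" unfolding j_def using t by auto
    qed
    ultimately show ?thesis using r step_alg[of k s j] False unfolding s_def by simp
  qed
qed

theorem theorem1p6:
  fixes \<alpha> \<beta> u :: "'a :: comm_ring_1" and n :: nat
  assumes "\<alpha> + \<beta> = -1" and "n \<ge> 1"
  shows "(\<Sum>\<sigma>\<in>permutations_of_set {1..n+1}.
            u ^ peaks \<sigma> * \<alpha> ^ (lrmin \<sigma> - 1) * \<beta> ^ (rlmin \<sigma> - 1))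
         = (if even n then (1 - u) ^ (n div 2) else - ((1 - u) ^ (n div 2)))"
proof -
  have "(\<Sum>\<sigma>\<in>permutations_of_set {1..n+1}.
            u ^ peaks \<sigma> * \<alpha> ^ (lrmin \<sigma> - 1) * \<beta> ^ (rlmin \<sigma> - 1)) = poly (Q \<alpha> \<beta> (n + 1)) u"
    unfolding Q_def poly_sum poly_monom wt_def by (simp add: mult_ac)
  also have "\<dots> = poly (smult (if even n then 1 else -1) ([:1, -1:] ^ (n div 2))) u"
    using Q_closed[OF assms(1), of "n + 1"] by simp
  also have "\<dots> = (if even n then (1 - u) ^ (n div 2) else - ((1 - u) ^ (n div 2)))"
    by (simp add: poly_power)
  finally show ?thesis .
qed

end
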